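(* Let $A\in\mathbb{R}^{n\times n}$ with $A\ge0$, $B\in\mathbb{R}^{n\times m}$, $C\in\mathbb{R}^{p\times n}$, $E\in\mathbb{R}^{n\times q}$ with $E\ge 0$, and $F\in\mathbb{R}^{p\times r}$ (no sign restriction). Consider \[ x(t+1)=Ax(t)+Bu(t)+Ew(t),\qquad y(t)=Cx(t)+Fv(t), \] where $w(t)\in\mathbb{R}^q_+$ and $v(t)\in\mathbb{R}^r_+$ are random vectors with $\mathbb{E}[w(t)]=\mathbf{1}$ and $\mathbb{E}[v(t)]=\mathbf{1}$ for all $t$. Let the upper and lower estimates evolve as \[ \overline{x}(t+1)=(A-\overline{L}C)\overline{x}(t)+\overline{L}y(t)+Bu(t),\qquad \underline{x}(t+1)=(A-\underline{L}C)\underline{x}(t)+\underline{L}y(t)+Bu(t), \] with $\overline{L},\underline{L}\in\mathbb{R}^{n\times p}$, and let $u(t)=\overline{K}\,\overline{x}(t)+\underline{K}\,\underline{x}(t)$ with $\overline{K},\underline{K}\in\mathbb{R}^{m\times n}$. Let $X(t)=\mathbb{E}[(x(t),\overline{x}(t),\underline{x}(t))]\in\mathbb{R}^{3n}$ and $\mathcal{X}=\{(x,\overline{x},\underline{x}) : x,\overline{x},\underline{x}\in\mathbb{R}^n_+,\ \underline{x}\le x\le \overline{x}\}$, and suppose the initialization satisfies $X(0)\in\mathcal{X}$. Then the following are equivalent: (i) The matrices $A+B(\overline{K}+\underline{K})$, $A-\overline{L}C$ and $A-\underline{L}C$ are Schur, and \[ A+B(\overline{K}+\underline{K})\ge 0,\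 A+B\overline{K}\ge0,\ B\overline{K}\ge0,\ A-\overline{L}C\ge0,\ A-\underline{L}C\ge0,\ B\overline{K}+\underline{L}C\ge0, \] \[ \overline{L}F\mathbf{1}-E\mathbf{1}\ge0,\quad E\mathbf{1}-\underline{L}F\mathbf{1}\ge0,\quad \underline{L}F\mathbf{1}\ge 0. \] (ii) For all initial conditions with $x(0)\in\mathbb{R}^n_+$ and $X(0)\in\mathcal{X}$, the expected state satisfies $X(t)\in\mathcal{X}$ for all $t\ge0$ and $X(t)$ converges asymptotically to a single fixed point $X^*\in\mathcal{X}$.
   Context: All inequalities between matrices or vectors are element-wise; $\mathbb{R}^k_+$ is the closed nonnegative orthant and $\mathbf{1}$ denotes a vector of ones of the appropriate dimension. A square matrix is Schur if its spectral radius is less than $1$. *)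

theory Defs
  imports "HOL-Analysis.Analysis" "HOL-Probability.Probability"
begin

text \<open>Complex eigenvalues of a real square matrix, spectral radius, Schur stability.\<close>

definition cmat :: "real^'n^'n \<Rightarrow> complex^'n^'n" where
  "cmat A = (\<chi> i j. complex_of_real (A $ i $ j))"

definition eigenvalues_c :: "real^'n^'n \<Rightarrow> complex set" where
  "eigenvalues_c A = {c. \<exists>v::complex^'n. v \<noteq> 0 \<and> cmat A *v v = c *s v}"

definition spec_rad :: "real^'n^'n \<Rightarrow> real" where
  "spec_rad A = Max (cmod ` eigenvalues_c A)"

definition schur :: "real^'n^'n \<Rightarrow> bool" where
  "schur A \<longleftrightarrow> spec_rad A < 1"

text \<open>Vector of ones.\<close>
abbreviation ones :: "real^'k" where "ones \<equiv> vec 1"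

text \<open>The admissible set \<X> = {(x, xu, xl) : x, xu, xl \<ge> 0, xl \<le> x \<le> xu}.\<close>
definition Xset :: "((real^'n) \<times> (real^'n) \<times> (real^'n)) set" where
  "Xset = {(x, xu, xl). 0 \<le> x \<and> 0 \<le> xu \<and> 0 \<le> xl \<and> xl \<le> x \<and> x \<le> xu}"

text \<open>Closed-loop stochastic trajectory (x(t), upper estimate, lower estimate),
  sample-path-wise, driven by the noise w, v and the initial states.\<close>
fun traj ::
  "real^'n^'n \<Rightarrow> real^'m^'n \<Rightarrow> real^'n^'p \<Rightarrow> real^'q^'n \<Rightarrow> real^'r^'p \<Rightarrow>
   real^'p^'n \<Rightarrow> real^'p^'n \<Rightarrow> real^'n^'m \<Rightarrow> real^'n^'m \<Rightarrow>
   (nat \<Rightarrow> 'a \<Rightarrow> real^'q) \<Rightarrow> (nat \<Rightarrow> 'a \<Rightarrow> real^'r) \<Rightarrow>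
   ('a \<Rightarrow> real^'n) \<Rightarrow> ('a \<Rightarrow> real^'n) \<Rightarrow> ('a \<Rightarrow> real^'n) \<Rightarrow>
   nat \<Rightarrow> 'a \<Rightarrow> (real^'n) \<times> (real^'n) \<times> (real^'n)" where
  "traj A B C E F Lu Ll Ku Kl w v x0 xu0 xl0 0 \<omega> = (x0 \<omega>, xu0 \<omega>, xl0 \<omega>)"
| "traj A B C E F Lu Ll Ku Kl w v x0 xu0 xl0 (Suc t) \<omega> =
    (let (x, xu, xl) = traj A B C E F Lu Ll Ku Kl w v x0 xu0 xl0 t \<omega>;
         u = Ku *v xu + Kl *v xl;
         y = C *v x + F *v v t \<omega>
     in (A *v x + B *v u + E *v w t \<omega>,
         (A - Lu ** C) *v xu + Lu *v y + B *v u,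
         (A - Ll ** C) *v xl + Ll *v y + B *v u))"

end

theory Submission
  imports Defs "Jordan_Normal_Form.Spectral_Radius"
begin

(* ---- part A ---- *)
definition idx :: "nat \<Rightarrow> 'n::finite" where
  "idx = (SOME f. bij_betw f {0..<CARD('n)} (UNIV::'n set))"

lemma idx_bij: "bij_betw (idx::nat\<Rightarrow>'n::finite) {0..<CARD('n)} UNIV"
proof -
  have "\<exists>f. bij_betw f {0..<CARD('n)} (UNIV::'n set)" by (rule ex_bij_betw_nat_finite) simp
  thus ?thesis unfolding idx_def by (rule someI_ex)
qed

definition pos :: "'n::finite \<Rightarrow> nat" where
  "pos = the_inv_into {0..<CARD('n)} idx"

lemma idx_pos[simp]: "idx (pos i) = (i::'n::finite)"
  unfolding pos_def by (rule f_the_inv_into_f_bij_betw[OF idx_bij]) simp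

lemma pos_lt[simp]: "pos (i::'n::finite) < CARD('n)"
proof -
  have "pos i \<in> {0..<CARD('n)}"
    unfolding pos_def by (rule bij_betw_apply[OF bij_betw_the_inv_into[OF idx_bij]]) simp
  thus ?thesis by simp
qed

lemma pos_idx[simp]: "j < CARD('n) \<Longrightarrow> pos (idx j :: 'n::finite) = j"
  unfolding pos_def by (rule the_inv_into_f_f[OF bij_betw_imp_inj_on[OF idx_bij]]) simp

lemma sum_idx: "(\<Sum>j\<in>{0..<CARD('n)}. f (idx j :: 'n::finite)) = (\<Sum>k\<in>UNIV. f k)"
  using sum.reindex_bij_betw[OF idx_bij, of f] by simp

definition to_jv :: "complex^'n::finite \<Rightarrow> complex Matrix.vec" where
  "to_jv v = Matrix.vec CARD('n) (\<lambda>i. vec_nth v (idx i))"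

definition of_jv :: "complex Matrix.vec \<Rightarrow> complex^'n::finite" where
  "of_jv w = (\<chi> i. vec_index w (pos i))"

definition to_jm :: "complex^'n^'n::finite \<Rightarrow> complex mat" where
  "to_jm M = Matrix.mat CARD('n) CARD('n) (\<lambda>(i,j). vec_nth (vec_nth M (idx i)) (idx j))"

lemma to_jm_carrier[simp]: "to_jm (M::complex^'n^'n::finite) \<in> carrier_mat CARD('n) CARD('n)"
  unfolding to_jm_def by simp

lemma to_jv_carrier[simp]: "to_jv (v::complex^'n::finite) \<in> carrier_vec CARD('n)"
  unfolding to_jv_def by simp

lemma to_jv_mv: "to_jm M *\<^sub>v to_jv v = to_jv (M *v (v::complex^'n::finite))"
proof (rule eq_vecI)
  fix i assume "i < dim_vec (to_jv (M *v v))"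
  hence i: "i < CARD('n)" by (simp add: to_jv_def)
  have "vec_index (to_jm M *\<^sub>v to_jv v) i = (\<Sum>j\<in>{0..<CARD('n)}. vec_nth (vec_nth M (idx i)) (idx j) * vec_nth v (idx j))"
    using i by (simp add: to_jm_def to_jv_def scalar_prod_def)
  also have "\<dots> = (\<Sum>k\<in>UNIV. vec_nth (vec_nth M (idx i)) k * vec_nth v k)"
    by (rule sum_idx)
  also have "\<dots> = vec_index (to_jv (M *v v)) i"
    using i by (simp add: to_jv_def matrix_vector_mult_def)
  finally show "vec_index (to_jm M *\<^sub>v to_jv v) i = vec_index (to_jv (M *v v)) i" .
qed (simp add: to_jm_def to_jv_def)

lemma to_of_jv: "w \<in> carrier_vec CARD('n) \<Longrightarrow> to_jv (of_jv w :: complex^'n::finite) = w"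
  by (intro eq_vecI) (simp_all add: to_jv_def of_jv_def)

lemma to_jv_inj: "to_jv v = to_jv w \<Longrightarrow> v = (w::complex^'n::finite)"
proof -
  assume h: "to_jv v = to_jv w"
  have "vec_nth v i = vec_nth w i" for i
  proof -
    have "vec_index (to_jv v) (pos i) = vec_index (to_jv w) (pos i)" using h by simp
    thus ?thesis unfolding to_jv_def using index_vec[OF pos_lt[of i]] by simp
  qed
  thus ?thesis by (simp add: Finite_Cartesian_Product.vec_eq_iff)
qed

lemma dim_row_to_jm[simp]: "dim_row (to_jm (M::complex^'n^'n::finite)) = CARD('n)"
  by (simp add: to_jm_def)
lemma dim_vec_to_jv[simp]: "dim_vec (to_jv (v::complex^'n::finite)) = CARD('n)"
  by (simp add: to_jv_def)

lemma to_jv_zero[simp]: "to_jv (0::complex^'n::finite) = 0\<^sub>v CARD('n)"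
  by (intro eq_vecI) (simp_all add: to_jv_def)

lemma to_jv_smult: "to_jv (c *s (v::complex^'n::finite)) = c \<cdot>\<^sub>v to_jv v"
  by (intro eq_vecI) (simp_all add: to_jv_def)

lemma eig_bridge: "eigenvalues_c (N::real^'n^'n::finite) = spectrum (to_jm (cmat N))"
proof -
  have "c \<in> eigenvalues_c N \<longleftrightarrow> eigenvalue (to_jm (cmat N)) c" for c
  proof
    assume "c \<in> eigenvalues_c N"
    then obtain v where v: "v \<noteq> 0" "cmat N *v v = c *s v" by (auto simp: eigenvalues_c_def)
    have "to_jv v \<noteq> 0\<^sub>v CARD('n)" using v(1) to_jv_inj[of v 0] by auto
    moreover have "to_jm (cmat N) *\<^sub>v to_jv v = c \<cdot>\<^sub>v to_jv v"
      by (simp add: to_jv_mv v(2) to_jv_smult)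
    ultimately show "eigenvalue (to_jm (cmat N)) c"
      unfolding eigenvalue_def eigenvector_def by (intro exI[of _ "to_jv v"]) simp
  next
    assume "eigenvalue (to_jm (cmat N)) c"
    then obtain w where w: "w \<in> carrier_vec CARD('n)" "w \<noteq> 0\<^sub>v CARD('n)"
      "to_jm (cmat N) *\<^sub>v w = c \<cdot>\<^sub>v w"
      unfolding eigenvalue_def eigenvector_def by auto
    define v where "v = (of_jv w :: complex^'n)"
    have tw: "to_jv v = w" using w(1) by (simp add: v_def to_of_jv)
    have "v \<noteq> 0" using w(2) tw by auto
    moreover have "cmat N *v v = c *s v"
    proof (rule to_jv_inj)
      show "to_jv (cmat N *v v) = to_jv (c *s v)"
        unfolding to_jv_mv[symmetric] to_jv_smult tw by (rule w(3))
    qed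
    ultimately show "c \<in> eigenvalues_c N" by (auto simp: eigenvalues_c_def)
  qed
  thus ?thesis by (auto simp: spectrum_def)
qed

lemma eig_finite: "finite (eigenvalues_c (N::real^'n^'n::finite))"
  unfolding eig_bridge by (rule card_finite_spectrum(1)[OF to_jm_carrier])

lemma eig_nonempty: "eigenvalues_c (N::real^'n^'n::finite) \<noteq> {}"
  unfolding eig_bridge by (rule spectrum_non_empty[OF to_jm_carrier]) simp


definition iter :: "real^'n^'n \<Rightarrow> nat \<Rightarrow> real^'n \<Rightarrow> real^'n" where
  "iter N k = ((*v) N ^^ k)"

lemma iter_0[simp]: "iter N 0 z = z" by (simp add: iter_def)
lemma iter_Suc: "iter N (Suc k) z = N *v iter N k z" by (simp add: iter_def)
lemma iter_Suc': "iter N (Suc k) z = iter N k (N *v z)" unfolding iter_def funpow_Suc_right by simp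

lemma iter_diff: "iter N k (a - b) = iter N k a - iter N k b"
  by (induct k) (simp_all add: iter_Suc matrix_vector_mult_diff_distrib)
lemma iter_add: "iter N k (a + b) = iter N k a + iter N k b"
  by (induct k) (simp_all add: iter_Suc matrix_vector_right_distrib)
lemma iter_zero[simp]: "iter N k 0 = 0"
  by (induct k) (simp_all add: iter_Suc)

definition cvec :: "real^'n \<Rightarrow> complex^'n" where
  "cvec z = (\<chi> i. complex_of_real (z $ i))"

lemma cmat_cvec: "cmat N *v cvec z = cvec (N *v z)"
  by (simp add: cmat_def cvec_def matrix_vector_mult_def Finite_Cartesian_Product.vec_eq_iff)

lemma pow_bridge:
  "to_jm (cmat N) ^\<^sub>m k *\<^sub>v to_jv (cvec z) = to_jv (cvec (iter N k (z::real^'n::finite)))"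
proof (induct k arbitrary: z)
  case 0
  show ?case by (simp add: one_mult_mat_vec[OF to_jv_carrier])
next
  case (Suc k)
  have "to_jm (cmat N) ^\<^sub>m Suc k *\<^sub>v to_jv (cvec z)
      = to_jm (cmat N) ^\<^sub>m k *\<^sub>v (to_jm (cmat N) *\<^sub>v to_jv (cvec z))"
    by (simp add: assoc_mult_mat_vec[OF pow_carrier_mat[OF to_jm_carrier] to_jm_carrier to_jv_carrier])
  also have "\<dots> = to_jm (cmat N) ^\<^sub>m k *\<^sub>v to_jv (cvec (N *v z))"
    by (simp add: to_jv_mv cmat_cvec)
  also have "\<dots> = to_jv (cvec (iter N (Suc k) z))"
    by (simp add: Suc iter_Suc')
  finally show ?case .
qed

lemma cmat_scale: "cmat (s *\<^sub>R N) *v v = complex_of_real s *s (cmat N *v v)"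
  by (simp add: cmat_def matrix_vector_mult_def Finite_Cartesian_Product.vec_eq_iff sum_distrib_left
      algebra_simps)

lemma iter_scale: "iter (s *\<^sub>R N) k z = s ^ k *\<^sub>R iter N k z"
  by (induct k) (simp_all add: iter_Suc scaleR_matrix_vector_assoc matrix_vector_mult_scaleR mult_ac)

lemma schur_bound:
  assumes "schur (N::real^'n^'n::finite)"
  shows "\<exists>c r. 0 \<le> c \<and> 0 < r \<and> r < 1 \<and> (\<forall>k z. norm (iter N k z) \<le> c * r ^ k * norm z)"
proof -
  define \<rho> where "\<rho> = spec_rad N"
  have \<rho>1: "\<rho> < 1" using assms by (simp add: schur_def \<rho>_def)
  have le\<rho>: "cmod l \<le> \<rho>" if "l \<in> eigenvalues_c N" for l
    unfolding \<rho>_def spec_rad_def by (rule Max_ge) (use eig_finite that in auto)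
  define r where "r = max (1/2) ((1 + \<rho>) / 2)"
  have r0: "0 < r" unfolding r_def by (simp add: less_max_iff_disj)
  have r1: "r < 1" unfolding r_def using \<rho>1 by (simp add: max_less_iff_conj)
  have \<rho>r: "\<rho> < r" unfolding r_def using \<rho>1 by (simp add: less_max_iff_disj)
  define N' where "N' = (1 / r) *\<^sub>R N"
  have eig': "cmod l < 1" if lin: "l \<in> eigenvalues_c N'" for l
  proof -
    obtain v where v: "v \<noteq> 0" "cmat N' *v v = l *s v" using lin by (auto simp: eigenvalues_c_def)
    have "cmat N *v v = (complex_of_real r * l) *s v"
    proof -
      have "complex_of_real (1/r) *s (cmat N *v v) = l *s v" using v(2) by (simp add: N'_def cmat_scale)
      hence "complex_of_real r *s (complex_of_real (1/r) *s (cmat N *v v)) = complex_of_real r *s (l *s v)"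
        by simp
      thus ?thesis using r0 by (simp add: vector_smult_assoc)
    qed
    hence "complex_of_real r * l \<in> eigenvalues_c N" using v(1) by (auto simp: eigenvalues_c_def)
    hence "cmod (complex_of_real r * l) \<le> \<rho>" by (rule le\<rho>)
    hence h: "r * cmod l \<le> \<rho>" using r0 by (simp add: norm_mult)
    have "r * cmod l < r * 1" using h \<rho>r by simp
    thus ?thesis using r0 by (simp only: mult_less_cancel_left_pos)
  qed
  define J where "J = to_jm (cmat N')"
  have J: "J \<in> carrier_mat CARD('n) CARD('n)" by (simp add: J_def)
  have "spectral_radius J \<in> cmod ` spectrum J"
    by (rule spectral_radius_mem_max(1)[OF J]) simp
  then obtain l where "l \<in> eigenvalues_c N'" "spectral_radius J = cmod l"
    by (auto simp: J_def eig_bridge)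
  hence "spectral_radius J < 1" using eig' by simp
  then obtain c where c: "\<And>k. norm_bound (J ^\<^sub>m k) c"
    using spectral_radius_jnf_norm_bound_less_1_upper_triangular[OF J] by blast
  have c0: "0 \<le> c"
  proof -
    have pos0: "0 < CARD('n)" by simp
    have "1 \<le> c"
      using c[of 0] J pos0 unfolding norm_bound_def by (simp add: pow_carrier_mat) (drule spec[of _ 0], simp, drule spec[of _ 0], simp)
    thus ?thesis by simp
  qed
  define n where "n = CARD('n)"
  have comp: "\<bar>iter N' k z $ i\<bar> \<le> n * c * norm z" for k z i
  proof -
    define p where "p = pos i"
    have p: "p < CARD('n)" by (simp add: p_def)
    have Jk: "J ^\<^sub>m k \<in> carrier_mat CARD('n) CARD('n)" by (rule pow_carrier_mat[OF J])
    have dr: "dim_row (J ^\<^sub>m k) = CARD('n)" "dim_col (J ^\<^sub>m k) = CARD('n)" "dim_row J = CARD('n)" "dim_col J = CARD('n)" using Jk J by auto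
    have "complex_of_real (iter N' k z $ i) = vec_index (to_jv (cvec (iter N' k z))) p"
      using p by (simp add: to_jv_def cvec_def p_def)
    also have "\<dots> = vec_index (J ^\<^sub>m k *\<^sub>v to_jv (cvec z)) p"
      by (simp add: J_def pow_bridge)
    also have "\<dots> = scalar_prod (Matrix.row (J ^\<^sub>m k) p) (to_jv (cvec z))"
      by (rule index_mult_mat_vec) (use p Jk in auto)
    also have "\<dots> = (\<Sum>j\<in>{0..<CARD('n)}. (J ^\<^sub>m k) $$ (p, j) * complex_of_real (z $ idx j))"
      unfolding scalar_prod_def using p Jk by (intro sum.cong) (auto simp: to_jv_def cvec_def dr index_row)
    finally have eq: "complex_of_real (iter N' k z $ i) = (\<Sum>j\<in>{0..<CARD('n)}. (J ^\<^sub>m k) $$ (p, j) * complex_of_real (z $ idx j))" .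
    have "\<bar>iter N' k z $ i\<bar> = cmod (complex_of_real (iter N' k z $ i))" by simp
    also have "\<dots> \<le> (\<Sum>j\<in>{0..<CARD('n)}. cmod ((J ^\<^sub>m k) $$ (p, j) * complex_of_real (z $ idx j)))"
      unfolding eq by (rule norm_sum)
    also have "\<dots> \<le> (\<Sum>j\<in>{0..<CARD('n)}. c * norm z)"
    proof (rule sum_mono)
      fix j assume j: "j \<in> {0..<CARD('n)}"
      have "cmod ((J ^\<^sub>m k) $$ (p, j)) \<le> c" using c[of k] Jk p j unfolding norm_bound_def by (auto simp: dr)
      moreover have "\<bar>z $ idx j\<bar> \<le> norm z" by (rule component_le_norm_cart)
      ultimately show "cmod ((J ^\<^sub>m k) $$ (p, j) * complex_of_real (z $ idx j)) \<le> c * norm z"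
        by (simp add: norm_mult mult_mono' c0)
    qed
    also have "\<dots> = n * c * norm z" by (simp add: n_def)
    finally show ?thesis .
  qed
  have "norm (iter N k z) \<le> (n * n * c) * r ^ k * norm z" for k z
  proof -
    have "iter N k z = r ^ k *\<^sub>R iter N' k z"
    proof -
      have "N = r *\<^sub>R N'" using r0 by (simp add: N'_def)
      thus ?thesis by (simp add: iter_scale)
    qed
    hence "norm (iter N k z) = r ^ k * norm (iter N' k z)" using r0 by simp
    also have "\<dots> \<le> r ^ k * (\<Sum>i\<in>UNIV. \<bar>iter N' k z $ i\<bar>)"
      using r0 by (intro mult_left_mono norm_le_l1_cart) simp
    also have "\<dots> \<le> r ^ k * (\<Sum>i\<in>(UNIV::'n set). n * c * norm z)"
      using r0 by (intro mult_left_mono sum_mono comp) simp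
    also have "\<dots> = (n * n * c) * r ^ k * norm z" by (simp add: n_def)
    finally show ?thesis .
  qed
  thus ?thesis using c0 r0 r1 by (intro exI[of _ "n * n * c"] exI[of _ r]) auto
qed


lemma cmat_complexify:
  "cmat N *v (\<chi> j. complex_of_real (vec_nth p j) + \<i> * complex_of_real (vec_nth q j))
   = (\<chi> j. complex_of_real (vec_nth (N *v p) j) + \<i> * complex_of_real (vec_nth (N *v q) j))"
  by (simp add: cmat_def matrix_vector_mult_def Finite_Cartesian_Product.vec_eq_iff sum.distrib
      sum_distrib_left algebra_simps)

lemma schur_of_conv:
  assumes conv: "\<And>z. (\<lambda>k. iter N k z) \<longlonglongrightarrow> 0"
  shows "schur (N::real^'n^'n::finite)"
proof -
  have fin: "finite (cmod ` eigenvalues_c N)" using eig_finite[of N] by simp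
  have ne: "cmod ` eigenvalues_c N \<noteq> {}" using eig_nonempty[of N] by simp
  from Max_in[OF fin ne] obtain l where l: "l \<in> eigenvalues_c N" "spec_rad N = cmod l"
    by (auto simp: spec_rad_def)
  obtain v where v: "v \<noteq> 0" "cmat N *v v = l *s v" using l(1) by (auto simp: eigenvalues_c_def)
  obtain i where vi: "vec_nth v i \<noteq> 0" using v(1) by (auto simp: Finite_Cartesian_Product.vec_eq_iff)
  define a :: "real^'n" where "a = (\<chi> j. Re (vec_nth v j))"
  define b :: "real^'n" where "b = (\<chi> j. Im (vec_nth v j))"
  have v_eq: "v = (\<chi> j. complex_of_real (vec_nth a j) + \<i> * complex_of_real (vec_nth b j))"
    by (simp add: a_def b_def Finite_Cartesian_Product.vec_eq_iff complex_eq_iff)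
  have pw: "(((*v) (cmat N)) ^^ k) v = l ^ k *s v" for k
    by (induct k) (simp_all add: vector_scalar_commute v(2) vector_smult_assoc mult.commute)
  have pw2: "(((*v) (cmat N)) ^^ k) v
      = (\<chi> j. complex_of_real (vec_nth (iter N k a) j) + \<i> * complex_of_real (vec_nth (iter N k b) j))" for k
  proof (induct k)
    case 0 show ?case using v_eq by simp
  next
    case (Suc k) show ?case by (simp add: Suc cmat_complexify iter_Suc)
  qed
  have compeq: "l ^ k * vec_nth v i = complex_of_real (vec_nth (iter N k a) i) + \<i> * complex_of_real (vec_nth (iter N k b) i)" for k
    using arg_cong[OF trans[OF pw[symmetric] pw2[of k]], of "\<lambda>x. vec_nth x i"] by simp
  have ta: "(\<lambda>k. vec_nth (iter N k a) i) \<longlonglongrightarrow> 0"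
    using tendsto_vec_nth[OF conv[of a], of i] by simp
  have tb: "(\<lambda>k. vec_nth (iter N k b) i) \<longlonglongrightarrow> 0"
    using tendsto_vec_nth[OF conv[of b], of i] by simp
  have "(\<lambda>k. complex_of_real (vec_nth (iter N k a) i) + \<i> * complex_of_real (vec_nth (iter N k b) i)) \<longlonglongrightarrow> 0"
    using tendsto_add[OF tendsto_of_real[OF ta] tendsto_mult[OF tendsto_const tendsto_of_real[OF tb]]]
    by simp
  hence "(\<lambda>k. l ^ k * vec_nth v i) \<longlonglongrightarrow> 0" unfolding compeq .
  hence t0: "(\<lambda>k. cmod l ^ k * cmod (vec_nth v i)) \<longlonglongrightarrow> 0"
    using tendsto_norm[of "\<lambda>k. l ^ k * vec_nth v i" 0 sequentially]
    by (simp add: norm_mult norm_power)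
  have "cmod l < 1"
  proof (rule ccontr)
    assume "\<not> cmod l < 1"
    hence "1 \<le> cmod l" by simp
    hence "\<forall>k\<ge>0. cmod (vec_nth v i) \<le> cmod l ^ k * cmod (vec_nth v i)"
    proof (intro allI impI)
      fix k :: nat assume "1 \<le> cmod l"
      hence "1 \<le> cmod l ^ k" by (rule one_le_power)
      hence "1 * cmod (vec_nth v i) \<le> cmod l ^ k * cmod (vec_nth v i)" by (rule mult_right_mono) simp
      thus "cmod (vec_nth v i) \<le> cmod l ^ k * cmod (vec_nth v i)" by simp
    qed
    hence "cmod (vec_nth v i) \<le> 0" by (intro LIMSEQ_le_const[OF t0]) blast
    thus False using vi by simp
  qed
  thus ?thesis using l(2) by (simp add: schur_def)
qed

(* ---- part C ---- *)
lemma scalar_contr: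
  fixes a b :: "nat \<Rightarrow> real"
  assumes a0: "\<And>t. 0 \<le> a t" and rec: "\<And>t. a (Suc t) \<le> \<rho> * a t + b t"
    and \<rho>0: "0 \<le> \<rho>" and \<rho>1: "\<rho> < 1" and b: "b \<longlonglongrightarrow> 0"
  shows "a \<longlonglongrightarrow> 0"
proof (rule LIMSEQ_I)
  fix \<epsilon> :: real assume \<epsilon>: "0 < \<epsilon>"
  have pos: "0 < (1 - \<rho>) * \<epsilon> / 2" using \<epsilon> \<rho>1 by simp
  have "eventually (\<lambda>t. b t < (1 - \<rho>) * \<epsilon> / 2) sequentially"
    using order_tendstoD(2)[OF b pos] .
  then obtain T where T: "\<And>t. t \<ge> T \<Longrightarrow> b t < (1 - \<rho>) * \<epsilon> / 2"
    by (auto simp: eventually_sequentially)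
  define f where "f m = a (T + m) - \<epsilon> / 2" for m
  have fb: "f m \<le> \<rho> ^ m * \<bar>f 0\<bar>" for m
  proof (induct m)
    case 0 show ?case by simp
  next
    case (Suc m)
    have "f (Suc m) \<le> \<rho> * a (T + m) + b (T + m) - \<epsilon> / 2"
      using rec[of "T + m"] by (simp add: f_def)
    also have "\<dots> \<le> \<rho> * a (T + m) + (1 - \<rho>) * \<epsilon> / 2 - \<epsilon> / 2"
      using T[of "T + m"] by simp
    also have "\<dots> = \<rho> * f m" by (simp add: f_def field_simps)
    also have "\<dots> \<le> \<rho> * (\<rho> ^ m * \<bar>f 0\<bar>)" using Suc \<rho>0 by (rule mult_left_mono)
    finally show ?case by simp
  qed
  have lim: "(\<lambda>m. \<rho> ^ m * \<bar>f 0\<bar>) \<longlonglongrightarrow> 0"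
    by (rule tendsto_mult_left_zero, rule LIMSEQ_power_zero) (use \<rho>0 \<rho>1 in simp)
  have "eventually (\<lambda>m. \<rho> ^ m * \<bar>f 0\<bar> < \<epsilon> / 2) sequentially"
    using order_tendstoD(2)[OF lim, of "\<epsilon> / 2"] \<epsilon> by simp
  then obtain m0 where m0: "\<And>m. m \<ge> m0 \<Longrightarrow> \<rho> ^ m * \<bar>f 0\<bar> < \<epsilon> / 2"
    by (auto simp: eventually_sequentially)
  show "\<exists>no. \<forall>n\<ge>no. norm (a n - 0) < \<epsilon>"
  proof (intro exI allI impI)
    fix n assume n: "T + m0 \<le> n"
    define m where "m = n - T"
    have nm: "n = T + m" and "m \<ge> m0" using n by (auto simp: m_def)
    have "a n - \<epsilon> / 2 < \<epsilon> / 2" using fb[of m] m0[OF \<open>m \<ge> m0\<close>] by (simp add: f_def nm)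
    thus "norm (a n - 0) < \<epsilon>" using a0[of n] by simp
  qed
qed

definition powbound :: "real^'n^'n \<Rightarrow> real \<Rightarrow> real \<Rightarrow> bool" where
  "powbound N c r \<longleftrightarrow> 0 \<le> c \<and> 0 < r \<and> r < 1 \<and> (\<forall>k z. norm (iter N k z) \<le> c * r ^ k * norm z)"

lemma powbound_zero:
  assumes pb: "powbound N c r" and d: "d = N *v d"
  shows "d = 0"
proof -
  have it: "iter N k d = d" for k by (induct k) (simp_all add: iter_Suc d[symmetric])
  have "(\<lambda>k. c * r ^ k * norm d) \<longlonglongrightarrow> 0"
    using pb unfolding powbound_def
    by (intro tendsto_mult_left_zero tendsto_mult_right_zero LIMSEQ_power_zero) simp
  moreover have "\<forall>k\<ge>0. norm d \<le> c * r ^ k * norm d"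
    using pb it unfolding powbound_def by metis
  ultimately have "norm d \<le> 0" by (intro LIMSEQ_le_const) blast+
  thus ?thesis by simp
qed

lemma powbound_fix:
  assumes pb: "powbound (N::real^'n^'n::finite) c r"
  shows "\<exists>z. z = N *v z + g"
proof -
  define f where "f z = z - N *v z" for z :: "real^'n"
  have lin: "linear f" unfolding f_def
    by (intro linear_compose_sub linear_id[unfolded id_def] matrix_vector_mul_linear)
  have "inj f"
  proof (rule injI)
    fix x y assume "f x = f y"
    hence "x - y = N *v (x - y)" by (simp add: f_def matrix_vector_mult_diff_distrib algebra_simps)
    from powbound_zero[OF pb this] show "x = y" by simp
  qed
  hence "surj f" using lin by (intro linear_injective_imp_surjective) simp_all
  then obtain z where "f z = g" by (metis surjD)
  thus ?thesis by (intro exI[of _ z]) (simp add: f_def algebra_simps)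
qed

lemma powbound_conv:
  assumes pb: "powbound (N::real^'n^'n::finite) c r"
    and fx: "zs = N *v zs + gs"
    and rec: "\<And>t. z (Suc t) = N *v z t + g t"
    and g: "g \<longlonglongrightarrow> gs"
  shows "z \<longlonglongrightarrow> zs"
proof -
  from pb have c0: "0 \<le> c" and r0: "0 < r" and r1: "r < 1"
    and bd: "\<And>k z. norm (iter N k z) \<le> c * r ^ k * norm z" unfolding powbound_def by auto
  have lim: "(\<lambda>k. c * r ^ k) \<longlonglongrightarrow> 0"
    using r0 r1 by (intro tendsto_mult_right_zero LIMSEQ_power_zero) simp
  have "eventually (\<lambda>k. c * r ^ k < 1/2) sequentially" using order_tendstoD(2)[OF lim, of "1/2"] by simp
  then obtain K0 where K0: "\<And>k. k \<ge> K0 \<Longrightarrow> c * r ^ k < 1/2" by (auto simp: eventually_sequentially)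
  define K where "K = Suc K0"
  have K: "c * r ^ K < 1/2" using K0[of K] by (simp add: K_def)
  define V where "V z = (\<Sum>k<K. norm (iter N k z))" for z
  define M where "M = real K * c + 1"
  have M1: "1 \<le> M" using c0 by (simp add: M_def)
  have V1: "norm x \<le> V x" for x
  proof -
    have "norm x = norm (iter N 0 x)" by simp
    also have "\<dots> \<le> V x" unfolding V_def
      by (rule member_le_sum) (auto simp: K_def)
    finally show ?thesis .
  qed
  have V0: "0 \<le> V x" for x unfolding V_def by (simp add: sum_nonneg)
  have V2: "V x \<le> M * norm x" for x
  proof -
    have "V x \<le> (\<Sum>k<K. c * norm x)" unfolding V_def
    proof (rule sum_mono)
      fix k assume "k \<in> {..<K}"
      have "r ^ k \<le> 1" using r0 r1 by (simp add: power_le_one)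
      hence "c * r ^ k * norm x \<le> c * 1 * norm x" using c0
        by (intro mult_right_mono mult_left_mono) simp_all
      thus "norm (iter N k x) \<le> c * norm x" using bd[of k x] by simp
    qed
    also have "\<dots> = real K * c * norm x" by simp
    also have "\<dots> \<le> M * norm x" by (simp add: M_def distrib_right)
    finally show ?thesis .
  qed
  have V3: "V (N *v x) \<le> V x - norm x / 2" for x
  proof -
    have "V (N *v x) = (\<Sum>k<K. norm (iter N (Suc k) x))" unfolding V_def by (simp add: iter_Suc')
    also have "\<dots> = (\<Sum>k<Suc K. norm (iter N k x)) - norm x"
      by (simp only: sum.lessThan_Suc_shift) simp
    also have "\<dots> = V x + norm (iter N K x) - norm x" by (simp add: V_def)
    also have "\<dots> \<le> V x + norm x / 2 - norm x"
    proof -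
      have "norm (iter N K x) \<le> c * r ^ K * norm x" by (rule bd)
      also have "\<dots> \<le> 1/2 * norm x" using K by (intro mult_right_mono) simp_all
      finally show ?thesis by simp
    qed
    finally show ?thesis by simp
  qed
  have V4: "V (x + y) \<le> V x + V y" for x y
    unfolding V_def sum.distrib[symmetric] by (intro sum_mono) (simp add: iter_add norm_triangle_ineq)
  define \<rho> where "\<rho> = 1 - 1 / (2 * M)"
  have \<rho>0: "0 \<le> \<rho>" and \<rho>1: "\<rho> < 1" using M1 by (auto simp: \<rho>_def field_simps)
  have V5: "V (N *v x) \<le> \<rho> * V x" for x
  proof -
    have "V x / M \<le> norm x" using V2[of x] M1 by (simp add: field_simps)
    hence "V x / M / 2 \<le> norm x / 2" by simp
    hence "V (N *v x) \<le> V x - V x / M / 2" using V3[of x] by linarith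
    thus ?thesis by (simp add: \<rho>_def field_simps)
  qed
  define d where "d t = z t - zs" for t
  define h where "h t = g t - gs" for t
  have drec: "d (Suc t) = N *v d t + h t" for t
    unfolding d_def h_def rec
    by (subst fx) (simp add: matrix_vector_mult_diff_distrib algebra_simps)
  have "(\<lambda>t. V (d t)) \<longlonglongrightarrow> 0"
  proof (rule scalar_contr[OF V0 _ \<rho>0 \<rho>1])
    fix t
    show "V (d (Suc t)) \<le> \<rho> * V (d t) + M * norm (h t)"
      unfolding drec using V4[of "N *v d t" "h t"] V5[of "d t"] V2[of "h t"] by linarith
  next
    have "h \<longlonglongrightarrow> 0" unfolding h_def using g by (rule LIM_zero)
    thus "(\<lambda>t. M * norm (h t)) \<longlonglongrightarrow> 0" by (intro tendsto_mult_right_zero tendsto_norm_zero)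
  qed
  hence "d \<longlonglongrightarrow> 0" by (rule Lim_null_comparison[rotated]) (simp add: V1)
  thus ?thesis unfolding d_def by (rule LIM_zero_cancel)
qed

(* ---- part D ---- *)
definition stp where
  "stp A B C E F Lu Ll Ku Kl X = (case X of (x, xu, xl) \<Rightarrow>
     (A *v x + B *v (Ku *v xu + Kl *v xl) + E *v ones,
      (A - Lu ** C) *v xu + Lu *v (C *v x + F *v ones) + B *v (Ku *v xu + Kl *v xl),
      (A - Ll ** C) *v xl + Ll *v (C *v x + F *v ones) + B *v (Ku *v xu + Kl *v xl)))"

lemmas mvsimps = matrix_vector_mult_diff_rdistrib matrix_vector_mult_add_rdistrib
  matrix_vector_mul_assoc[symmetric] matrix_vector_mult_diff_distrib matrix_vector_right_distrib
  matrix_add_ldistrib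

context
  fixes A :: "real^'n^'n" and B :: "real^'m^'n" and C :: "real^'n^'p"
    and E :: "real^'q^'n" and F :: "real^'r^'p"
    and Lu Ll :: "real^'p^'n" and Ku Kl :: "real^'n^'m"
begin

abbreviation "S \<equiv> stp A B C E F Lu Ll Ku Kl"

lemma T1: "fst (S (x, xu, xl)) - snd (snd (S (x, xu, xl)))
   = (A - Ll ** C) *v (x - xl) + (E *v ones - Ll *v (F *v ones))"
  by (simp add: stp_def mvsimps algebra_simps)

lemma T2: "fst (snd (S (x, xu, xl))) - fst (S (x, xu, xl))
   = (A - Lu ** C) *v (xu - x) + (Lu *v (F *v ones) - E *v ones)"
  by (simp add: stp_def mvsimps algebra_simps)

lemma T3: "snd (snd (S (x, xu, xl)))
   = (A + B ** (Ku + Kl)) *v xl + ((B ** Ku + Ll ** C) *v (x - xl) + (B ** Ku) *v (xu - x) + Ll *v (F *v ones))"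
  by (simp add: stp_def mvsimps algebra_simps)

lemma T4: "fst (S (x, xu, xl))
   = (A + B ** (Ku + Kl)) *v xl + (A + B ** Ku) *v (x - xl) + (B ** Ku) *v (xu - x) + E *v ones"
  by (simp add: stp_def mvsimps algebra_simps)

end


lemma vnn_add: "0 \<le> a \<Longrightarrow> 0 \<le> b \<Longrightarrow> 0 \<le> (a + b :: real^'n)"
  by (simp add: Finite_Cartesian_Product.less_eq_vec_def)

lemma vnn_mv: "0 \<le> (Mx::real^'n^'m) \<Longrightarrow> 0 \<le> z \<Longrightarrow> 0 \<le> Mx *v z"
  by (auto simp: Finite_Cartesian_Product.less_eq_vec_def matrix_vector_mult_def intro!: sum_nonneg)

lemma Xset_iff: "((x, xu, xl) \<in> Xset) \<longleftrightarrow> 0 \<le> xl \<and> 0 \<le> x - xl \<and> 0 \<le> xu - (x::real^'n)"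
  by (auto simp: Xset_def Finite_Cartesian_Product.less_eq_vec_def) (metis order_trans)+

lemma vec_le_lim:
  fixes a b :: "nat \<Rightarrow> real^'n"
  assumes "\<And>t. a t \<le> b t" "a \<longlonglongrightarrow> \<alpha>" "b \<longlonglongrightarrow> \<beta>"
  shows "\<alpha> \<le> \<beta>"
  unfolding Finite_Cartesian_Product.less_eq_vec_def
proof
  fix i
  show "vec_nth \<alpha> i \<le> vec_nth \<beta> i"
    by (rule LIMSEQ_le[OF tendsto_vec_nth[OF assms(2)] tendsto_vec_nth[OF assms(3)]])
       (use assms(1) in \<open>auto simp: Finite_Cartesian_Product.less_eq_vec_def\<close>)
qed

lemma Xset_lim:
  assumes "\<And>t. Y t \<in> Xset" "Y \<longlonglongrightarrow> L"
  shows "L \<in> Xset"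
proof -
  have f: "(\<lambda>t. fst (Y t)) \<longlonglongrightarrow> fst L" and u: "(\<lambda>t. fst (snd (Y t))) \<longlonglongrightarrow> fst (snd L)"
    and l: "(\<lambda>t. snd (snd (Y t))) \<longlonglongrightarrow> snd (snd L)"
    using assms(2) by (auto intro!: tendsto_fst tendsto_snd)
  have Y: "0 \<le> fst (Y t) \<and> 0 \<le> fst (snd (Y t)) \<and> 0 \<le> snd (snd (Y t)) \<and>
      snd (snd (Y t)) \<le> fst (Y t) \<and> fst (Y t) \<le> fst (snd (Y t))" for t
    using assms(1)[of t] by (cases "Y t") (auto simp: Xset_def)
  have "0 \<le> fst L" by (rule vec_le_lim[OF _ tendsto_const f]) (use Y in blast)
  moreover have "0 \<le> fst (snd L)" by (rule vec_le_lim[OF _ tendsto_const u]) (use Y in blast)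
  moreover have "0 \<le> snd (snd L)" by (rule vec_le_lim[OF _ tendsto_const l]) (use Y in blast)
  moreover have "snd (snd L) \<le> fst L" by (rule vec_le_lim[OF _ l f]) (use Y in blast)
  moreover have "fst L \<le> fst (snd L)" by (rule vec_le_lim[OF _ f u]) (use Y in blast)
  ultimately show ?thesis by (cases L) (auto simp: Xset_def)
qed

lemma diff_iter:
  assumes "\<And>t. a (Suc t) = N *v a t + g t" "\<And>t. b (Suc t) = N *v b t + g t"
  shows "b t - a t = iter N t (b 0 - a 0)"
proof (induct t)
  case (Suc t)
  have "b (Suc t) - a (Suc t) = N *v (b t - a t)"
    by (simp add: assms matrix_vector_mult_diff_distrib)
  thus ?case by (simp add: Suc iter_Suc)
qed simp

lemma conv_all:
  assumes "\<And>z. 0 \<le> z \<Longrightarrow> (\<lambda>k. iter N k z) \<longlonglongrightarrow> 0"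
  shows "(\<lambda>k. iter N k z) \<longlonglongrightarrow> (0::real^'n)"
proof -
  define zp :: "real^'n" where "zp = (\<chi> i. max (vec_nth z i) 0)"
  define zn :: "real^'n" where "zn = (\<chi> i. max (- vec_nth z i) 0)"
  have z: "z = zp - zn" by (auto simp: zp_def zn_def Finite_Cartesian_Product.vec_eq_iff max_def)
  have "0 \<le> zp" "0 \<le> zn" by (simp_all add: zp_def zn_def Finite_Cartesian_Product.less_eq_vec_def)
  hence "(\<lambda>k. iter N k zp - iter N k zn) \<longlonglongrightarrow> 0 - 0"
    by (intro tendsto_diff assms)
  thus ?thesis by (simp add: z iter_diff)
qed

lemma scal_extract:
  fixes m c :: real
  assumes "\<And>s. 0 \<le> s \<Longrightarrow> 0 \<le> s * m + c"
  shows "0 \<le> m"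
proof (rule ccontr)
  assume "\<not> 0 \<le> m"
  hence m: "m < 0" by simp
  define s where "s = (\<bar>c\<bar> + 1) / (- m)"
  have s0: "0 \<le> s" unfolding s_def by (rule divide_nonneg_pos) (use m in simp_all)
  have "s * m = - (\<bar>c\<bar> + 1)" using m by (simp add: s_def)
  hence "s * m + c < 0" by linarith
  thus False using assms[OF s0] by simp
qed

lemma nonneg_extract:
  fixes Mx :: "real^'n^'m" and c :: "real^'m"
  assumes h: "\<And>z. 0 \<le> z \<Longrightarrow> 0 \<le> Mx *v z + c"
  shows "0 \<le> Mx" "0 \<le> c"
proof -
  show "0 \<le> c" using h[of 0] by simp
  show "0 \<le> Mx" unfolding Finite_Cartesian_Product.less_eq_vec_def
  proof (intro allI)
    fix i j
    have "0 \<le> vec_nth Mx i $ j"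
    proof (rule scal_extract)
      fix s :: real assume s: "0 \<le> s"
      have "0 \<le> s *\<^sub>R axis j (1::real)" using s by (simp add: Finite_Cartesian_Product.less_eq_vec_def axis_def)
      from h[OF this] have "0 \<le> vec_nth (Mx *v (s *\<^sub>R axis j 1) + c) i"
        by (simp add: Finite_Cartesian_Product.less_eq_vec_def)
      thus "0 \<le> s * vec_nth (vec_nth Mx i) j + vec_nth c i"
        by (simp add: matrix_vector_mult_scaleR matrix_vector_mult_basis column_def)
    qed
    thus "vec_nth (vec_nth 0 i) j \<le> vec_nth (vec_nth Mx i) j" by simp
  qed
qed


context
  fixes A :: "real^'n^'n" and B :: "real^'m^'n" and C :: "real^'n^'p"
    and E :: "real^'q^'n" and F :: "real^'r^'p"
    and Lu Ll :: "real^'p^'n" and Ku Kl :: "real^'n^'m"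
begin

abbreviation "S' \<equiv> stp A B C E F Lu Ll Ku Kl"

lemma S_e1: "fst (S' X) - snd (snd (S' X))
   = (A - Ll ** C) *v (fst X - snd (snd X)) + (E *v ones - Ll *v (F *v ones))"
  by (cases X) (simp only: T1 fst_conv snd_conv)

lemma S_e2: "fst (snd (S' X)) - fst (S' X)
   = (A - Lu ** C) *v (fst (snd X) - fst X) + (Lu *v (F *v ones) - E *v ones)"
  by (cases X) (simp only: T2 fst_conv snd_conv)

lemma S_l: "snd (snd (S' X))
   = (A + B ** (Ku + Kl)) *v snd (snd X) + ((B ** Ku + Ll ** C) *v (fst X - snd (snd X))
      + (B ** Ku) *v (fst (snd X) - fst X) + Ll *v (F *v ones))"
  by (cases X) (simp only: T3 fst_conv snd_conv)

lemma S_x: "fst (S' X)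
   = (A + B ** (Ku + Kl)) *v snd (snd X) + (A + B ** Ku) *v (fst X - snd (snd X))
     + (B ** Ku) *v (fst (snd X) - fst X) + E *v ones"
  by (cases X) (simp only: T4 fst_conv snd_conv)

lemma Xset_iff': "X \<in> Xset \<longleftrightarrow> 0 \<le> snd (snd X) \<and> 0 \<le> fst X - snd (snd X) \<and> 0 \<le> fst (snd X) - fst X"
  by (cases X) (simp add: Xset_iff)

lemma inv_step:
  assumes "0 \<le> A + B ** (Ku + Kl)" "0 \<le> B ** Ku + Ll ** C" "0 \<le> B ** Ku"
    "0 \<le> A - Ll ** C" "0 \<le> A - Lu ** C"
    "0 \<le> E *v ones - Ll *v (F *v ones)" "0 \<le> Lu *v (F *v ones) - E *v ones" "0 \<le> Ll *v (F *v ones)"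
    and X: "X \<in> Xset"
  shows "S' X \<in> Xset"
proof -
  have a: "0 \<le> snd (snd X) \<and> 0 \<le> fst X - snd (snd X) \<and> 0 \<le> fst (snd X) - fst X"
    using X by (simp only: Xset_iff')
  have h1: "0 \<le> snd (snd (S' X))" unfolding S_l
    by (rule vnn_add[OF vnn_mv[OF assms(1) a[THEN conjunct1]]
        vnn_add[OF vnn_add[OF vnn_mv[OF assms(2) a[THEN conjunct2, THEN conjunct1]]
        vnn_mv[OF assms(3) a[THEN conjunct2, THEN conjunct2]]] assms(8)]])
  have h2: "0 \<le> fst (S' X) - snd (snd (S' X))" unfolding S_e1
    by (rule vnn_add[OF vnn_mv[OF assms(4) a[THEN conjunct2, THEN conjunct1]] assms(6)])
  have h3: "0 \<le> fst (snd (S' X)) - fst (S' X)" unfolding S_e2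
    by (rule vnn_add[OF vnn_mv[OF assms(5) a[THEN conjunct2, THEN conjunct2]] assms(7)])
  show ?thesis unfolding Xset_iff' using h1 h2 h3 by blast
qed

lemma det_conv:
  assumes pb1: "powbound (A - Ll ** C) a1 b1" and pb2: "powbound (A - Lu ** C) a2 b2"
    and pbP: "powbound (A + B ** (Ku + Kl)) a3 b3"
    and f1: "e1s = (A - Ll ** C) *v e1s + (E *v ones - Ll *v (F *v ones))"
    and f2: "e2s = (A - Lu ** C) *v e2s + (Lu *v (F *v ones) - E *v ones)"
    and f3: "ls = (A + B ** (Ku + Kl)) *v ls + ((B ** Ku + Ll ** C) *v e1s + (B ** Ku) *v e2s + Ll *v (F *v ones))"
    and rec: "\<And>t. Y (Suc t) = S' (Y t)"
  shows "Y \<longlonglongrightarrow> (ls + e1s, ls + e1s + e2s, ls)"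
proof -
  define l where "l t = snd (snd (Y t))" for t
  define e1 where "e1 t = fst (Y t) - l t" for t
  define e2 where "e2 t = fst (snd (Y t)) - fst (Y t)" for t
  have E1: "e1 \<longlonglongrightarrow> e1s"
    by (rule powbound_conv[OF pb1 f1, of _ "\<lambda>_. E *v ones - Ll *v (F *v ones)"])
       (simp_all add: e1_def l_def rec S_e1)
  have E2: "e2 \<longlonglongrightarrow> e2s"
    by (rule powbound_conv[OF pb2 f2, of _ "\<lambda>_. Lu *v (F *v ones) - E *v ones"])
       (simp_all add: e2_def rec S_e2)
  have G: "(\<lambda>t. (B ** Ku + Ll ** C) *v e1 t + (B ** Ku) *v e2 t + Ll *v (F *v ones))
      \<longlonglongrightarrow> (B ** Ku + Ll ** C) *v e1s + (B ** Ku) *v e2s + Ll *v (F *v ones)"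
    by (intro tendsto_add tendsto_const bounded_linear.tendsto[OF matrix_vector_mul_bounded_linear] E1 E2)
  have L: "l \<longlonglongrightarrow> ls"
    by (rule powbound_conv[OF pbP f3 _ G]) (simp add: l_def e1_def e2_def rec S_l)
  have Yeq: "Y t = (l t + e1 t, l t + e1 t + e2 t, l t)" for t
    by (cases "Y t") (simp add: l_def e1_def e2_def)
  show ?thesis unfolding Yeq
    by (intro tendsto_Pair tendsto_add L E1 E2)
qed

lemma det_diff:
  assumes rec: "\<And>t. Y (Suc t) = S' (Y t)" and rec': "\<And>t. Y' (Suc t) = S' (Y' t)"
  shows "(fst (Y' t) - snd (snd (Y' t))) - (fst (Y t) - snd (snd (Y t)))
           = iter (A - Ll ** C) t ((fst (Y' 0) - snd (snd (Y' 0))) - (fst (Y 0) - snd (snd (Y 0))))"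
    and "(fst (snd (Y' t)) - fst (Y' t)) - (fst (snd (Y t)) - fst (Y t))
           = iter (A - Lu ** C) t ((fst (snd (Y' 0)) - fst (Y' 0)) - (fst (snd (Y 0)) - fst (Y 0)))"
proof -
  show "(fst (Y' t) - snd (snd (Y' t))) - (fst (Y t) - snd (snd (Y t)))
           = iter (A - Ll ** C) t ((fst (Y' 0) - snd (snd (Y' 0))) - (fst (Y 0) - snd (snd (Y 0))))"
    by (rule diff_iter[where g="\<lambda>_. E *v ones - Ll *v (F *v ones)"]) (simp_all add: rec rec' S_e1)
  show "(fst (snd (Y' t)) - fst (Y' t)) - (fst (snd (Y t)) - fst (Y t))
           = iter (A - Lu ** C) t ((fst (snd (Y' 0)) - fst (Y' 0)) - (fst (snd (Y 0)) - fst (Y 0)))"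
    by (rule diff_iter[where g="\<lambda>_. Lu *v (F *v ones) - E *v ones"]) (simp_all add: rec rec' S_e2)
qed

lemma det_diff_l:
  assumes rec: "\<And>t. Y (Suc t) = S' (Y t)" and rec': "\<And>t. Y' (Suc t) = S' (Y' t)"
    and e1: "fst (Y' 0) - snd (snd (Y' 0)) = fst (Y 0) - snd (snd (Y 0))"
    and e2: "fst (snd (Y' 0)) - fst (Y' 0) = fst (snd (Y 0)) - fst (Y 0)"
  shows "snd (snd (Y' t)) - snd (snd (Y t)) = iter (A + B ** (Ku + Kl)) t (snd (snd (Y' 0)) - snd (snd (Y 0)))"
proof -
  have q1: "fst (Y' t) - snd (snd (Y' t)) = fst (Y t) - snd (snd (Y t))" for t
    using det_diff(1)[where Y=Y and Y'=Y' and t=t, OF rec rec'] e1 by simp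
  have q2: "fst (snd (Y' t)) - fst (Y' t) = fst (snd (Y t)) - fst (Y t)" for t
    using det_diff(2)[where Y=Y and Y'=Y' and t=t, OF rec rec'] e2 by simp
  show ?thesis
    by (rule diff_iter[where g="\<lambda>t. (B ** Ku + Ll ** C) *v (fst (Y t) - snd (snd (Y t)))
      + (B ** Ku) *v (fst (snd (Y t)) - fst (Y t)) + Ll *v (F *v ones)"])
       (simp_all add: rec rec' S_l q1 q2)
qed

end

(* ---- part E ---- *)
lemma int_mv: "integrable M f \<Longrightarrow> integrable M (\<lambda>x. (Mx::real^'n^'m) *v f x)"
  by (rule integrable_bounded_linear[OF matrix_vector_mul_bounded_linear])

lemma integral_mv: "integrable M f \<Longrightarrow> integral\<^sup>L M (\<lambda>x. (Mx::real^'n^'m) *v f x) = Mx *v integral\<^sup>L M f"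
  by (rule integral_bounded_linear[OF matrix_vector_mul_bounded_linear])

lemma integrable_triple:
  fixes a b c :: "'a \<Rightarrow> real^'n"
  assumes a: "integrable M a" and b: "integrable M b" and c: "integrable M c"
  shows "integrable M (\<lambda>\<omega>. (a \<omega>, b \<omega>, c \<omega>))"
proof -
  have l1: "bounded_linear (\<lambda>x::real^'n. (x, (0::real^'n), (0::real^'n)))"
    by (intro bounded_linear_Pair bounded_linear_ident bounded_linear_zero)
  have l2: "bounded_linear (\<lambda>x::real^'n. ((0::real^'n), x, (0::real^'n)))"
    by (intro bounded_linear_Pair bounded_linear_ident bounded_linear_zero)
  have l3: "bounded_linear (\<lambda>x::real^'n. ((0::real^'n), (0::real^'n), x))"
    by (intro bounded_linear_Pair bounded_linear_ident bounded_linear_zero)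
  have eq: "(\<lambda>\<omega>. (a \<omega>, b \<omega>, c \<omega>)) = (\<lambda>\<omega>. (a \<omega>, 0, 0) + ((0, b \<omega>, 0) + (0, 0, c \<omega>)))"
    by simp
  show ?thesis unfolding eq
    by (intro Bochner_Integration.integrable_add integrable_bounded_linear[OF l1 a]
        integrable_bounded_linear[OF l2 b] integrable_bounded_linear[OF l3 c])
qed

lemma integral_triple:
  fixes a b c :: "'a \<Rightarrow> real^'n"
  assumes a: "integrable M a" and b: "integrable M b" and c: "integrable M c"
  shows "integral\<^sup>L M (\<lambda>\<omega>. (a \<omega>, b \<omega>, c \<omega>)) = (integral\<^sup>L M a, integral\<^sup>L M b, integral\<^sup>L M c)"
proof -
  have I: "integrable M (\<lambda>\<omega>. (a \<omega>, b \<omega>, c \<omega>))" by (rule integrable_triple[OF a b c])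
  have I2: "integrable M (\<lambda>\<omega>. (b \<omega>, c \<omega>))" using integrable_snd[OF I] by simp
  have 1: "fst (integral\<^sup>L M (\<lambda>\<omega>. (a \<omega>, b \<omega>, c \<omega>))) = integral\<^sup>L M a"
    using integral_fst[OF I] by simp
  have 2: "snd (integral\<^sup>L M (\<lambda>\<omega>. (a \<omega>, b \<omega>, c \<omega>))) = integral\<^sup>L M (\<lambda>\<omega>. (b \<omega>, c \<omega>))"
    using integral_snd[OF I] by simp
  have 3: "fst (integral\<^sup>L M (\<lambda>\<omega>. (b \<omega>, c \<omega>))) = integral\<^sup>L M b"
    using integral_fst[OF I2] by simp
  have 4: "snd (integral\<^sup>L M (\<lambda>\<omega>. (b \<omega>, c \<omega>))) = integral\<^sup>L M c"
    using integral_snd[OF I2] by simp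
  show ?thesis by (intro prod_eqI) (simp_all add: 1 2 3 4)
qed

context
  fixes M :: "'a measure"
    and A :: "real^'n^'n" and B :: "real^'m^'n" and C :: "real^'n^'p"
    and E :: "real^'q^'n" and F :: "real^'r^'p"
    and Lu Ll :: "real^'p^'n" and Ku Kl :: "real^'n^'m"
    and w :: "nat \<Rightarrow> 'a \<Rightarrow> real^'q" and v :: "nat \<Rightarrow> 'a \<Rightarrow> real^'r"
    and x0 xu0 xl0 :: "'a \<Rightarrow> real^'n"
  assumes w_int: "\<And>t. integrable M (w t)"
    and w_mean: "\<And>t. integral\<^sup>L M (w t) = ones"
    and v_int: "\<And>t. integrable M (v t)"
    and v_mean: "\<And>t. integral\<^sup>L M (v t) = ones"
    and i0: "integrable M x0" "integrable M xu0" "integrable M xl0"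
begin

abbreviation "T \<equiv> traj A B C E F Lu Ll Ku Kl w v x0 xu0 xl0"

lemma traj_comp:
  "fst (T (Suc t) \<omega>) = A *v fst (T t \<omega>) + B *v (Ku *v fst (snd (T t \<omega>)) + Kl *v snd (snd (T t \<omega>))) + E *v w t \<omega>"
  "fst (snd (T (Suc t) \<omega>)) = (A - Lu ** C) *v fst (snd (T t \<omega>)) + Lu *v (C *v fst (T t \<omega>) + F *v v t \<omega>)
     + B *v (Ku *v fst (snd (T t \<omega>)) + Kl *v snd (snd (T t \<omega>)))"
  "snd (snd (T (Suc t) \<omega>)) = (A - Ll ** C) *v snd (snd (T t \<omega>)) + Ll *v (C *v fst (T t \<omega>) + F *v v t \<omega>)
     + B *v (Ku *v fst (snd (T t \<omega>)) + Kl *v snd (snd (T t \<omega>)))"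
proof -
  obtain x xu xl where e: "T t \<omega> = (x, xu, xl)" by (cases "T t \<omega>")
  have "T (Suc t) \<omega> = (A *v x + B *v (Ku *v xu + Kl *v xl) + E *v w t \<omega>,
         (A - Lu ** C) *v xu + Lu *v (C *v x + F *v v t \<omega>) + B *v (Ku *v xu + Kl *v xl),
         (A - Ll ** C) *v xl + Ll *v (C *v x + F *v v t \<omega>) + B *v (Ku *v xu + Kl *v xl))"
    by (simp only: traj.simps e Let_def case_prod_conv)
  thus "fst (T (Suc t) \<omega>) = A *v fst (T t \<omega>) + B *v (Ku *v fst (snd (T t \<omega>)) + Kl *v snd (snd (T t \<omega>))) + E *v w t \<omega>"
    "fst (snd (T (Suc t) \<omega>)) = (A - Lu ** C) *v fst (snd (T t \<omega>)) + Lu *v (C *v fst (T t \<omega>) + F *v v t \<omega>)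
     + B *v (Ku *v fst (snd (T t \<omega>)) + Kl *v snd (snd (T t \<omega>)))"
    "snd (snd (T (Suc t) \<omega>)) = (A - Ll ** C) *v snd (snd (T t \<omega>)) + Ll *v (C *v fst (T t \<omega>) + F *v v t \<omega>)
     + B *v (Ku *v fst (snd (T t \<omega>)) + Kl *v snd (snd (T t \<omega>)))"
    by (simp_all only: e fst_conv snd_conv)
qed

lemma traj_int:
  "integrable M (\<lambda>\<omega>. fst (T t \<omega>)) \<and> integrable M (\<lambda>\<omega>. fst (snd (T t \<omega>))) \<and> integrable M (\<lambda>\<omega>. snd (snd (T t \<omega>)))"
proof (induct t)
  case 0 show ?case using i0 by simp
next
  case (Suc t)
  then have a: "integrable M (\<lambda>\<omega>. fst (T t \<omega>))" and b: "integrable M (\<lambda>\<omega>. fst (snd (T t \<omega>)))"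
    and c: "integrable M (\<lambda>\<omega>. snd (snd (T t \<omega>)))" by auto
  show ?case unfolding traj_comp
    by (intro conjI Bochner_Integration.integrable_add int_mv a b c w_int v_int)
qed

lemma traj_integral: "integral\<^sup>L M (T t) =
   (integral\<^sup>L M (\<lambda>\<omega>. fst (T t \<omega>)), integral\<^sup>L M (\<lambda>\<omega>. fst (snd (T t \<omega>))), integral\<^sup>L M (\<lambda>\<omega>. snd (snd (T t \<omega>))))"
proof -
  have "T t = (\<lambda>\<omega>. (fst (T t \<omega>), fst (snd (T t \<omega>)), snd (snd (T t \<omega>))))" by simp
  hence "integral\<^sup>L M (T t) = integral\<^sup>L M (\<lambda>\<omega>. (fst (T t \<omega>), fst (snd (T t \<omega>)), snd (snd (T t \<omega>))))"
    by (rule arg_cong)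
  also have "\<dots> = (integral\<^sup>L M (\<lambda>\<omega>. fst (T t \<omega>)), integral\<^sup>L M (\<lambda>\<omega>. fst (snd (T t \<omega>))), integral\<^sup>L M (\<lambda>\<omega>. snd (snd (T t \<omega>))))"
    using traj_int[of t] by (intro integral_triple) auto
  finally show ?thesis .
qed

lemma traj_exp: "integral\<^sup>L M (T (Suc t)) = stp A B C E F Lu Ll Ku Kl (integral\<^sup>L M (T t))"
proof -
  from traj_int[of t] have a: "integrable M (\<lambda>\<omega>. fst (T t \<omega>))" and b: "integrable M (\<lambda>\<omega>. fst (snd (T t \<omega>)))"
    and c: "integrable M (\<lambda>\<omega>. snd (snd (T t \<omega>)))" by auto
  note ints = Bochner_Integration.integrable_add int_mv a b c w_int v_int
  show ?thesis
    unfolding traj_integral[of "Suc t"] traj_integral[of t] traj_comp stp_def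
    by (simp add: Bochner_Integration.integral_add ints integral_mv w_mean v_mean)
qed

end

(* ---- part F ---- *)
context
  fixes A :: "real^'n^'n" and B :: "real^'m^'n" and C :: "real^'n^'p"
    and E :: "real^'q^'n" and F :: "real^'r^'p"
    and Lu Ll :: "real^'p^'n" and Ku Kl :: "real^'n^'m"
begin

abbreviation "SS \<equiv> stp A B C E F Lu Ll Ku Kl"

lemma dir1:
  assumes H: "schur (A + B ** (Ku + Kl)) \<and> schur (A - Lu ** C) \<and> schur (A - Ll ** C) \<and>
          0 \<le> A + B ** (Ku + Kl) \<and> 0 \<le> A + B ** Ku \<and> 0 \<le> B ** Ku \<and>
          0 \<le> A - Lu ** C \<and> 0 \<le> A - Ll ** C \<and> 0 \<le> B ** Ku + Ll ** C \<and>
          0 \<le> Lu *v (F *v ones) - E *v ones \<and> 0 \<le> E *v ones - Ll *v (F *v ones) \<and>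
          0 \<le> Ll *v (F *v ones)"
  shows "\<exists>Xs\<in>Xset. \<forall>Y. (\<forall>t. Y (Suc t) = SS (Y t)) \<longrightarrow> Y 0 \<in> Xset \<longrightarrow> (\<forall>t. Y t \<in> Xset) \<and> Y \<longlonglongrightarrow> Xs"
proof -
  from H have s1: "schur (A + B ** (Ku + Kl))" and s2: "schur (A - Lu ** C)" and s3: "schur (A - Ll ** C)"
    by auto
  from schur_bound[OF s3] obtain a1 b1 where pb1: "powbound (A - Ll ** C) a1 b1"
    unfolding powbound_def by blast
  from schur_bound[OF s2] obtain a2 b2 where pb2: "powbound (A - Lu ** C) a2 b2"
    unfolding powbound_def by blast
  from schur_bound[OF s1] obtain a3 b3 where pbP: "powbound (A + B ** (Ku + Kl)) a3 b3"
    unfolding powbound_def by blast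
  obtain e1s where f1: "e1s = (A - Ll ** C) *v e1s + (E *v ones - Ll *v (F *v ones))"
    using powbound_fix[OF pb1] by blast
  obtain e2s where f2: "e2s = (A - Lu ** C) *v e2s + (Lu *v (F *v ones) - E *v ones)"
    using powbound_fix[OF pb2] by blast
  obtain ls where f3: "ls = (A + B ** (Ku + Kl)) *v ls + ((B ** Ku + Ll ** C) *v e1s + (B ** Ku) *v e2s + Ll *v (F *v ones))"
    using powbound_fix[OF pbP] by blast
  define Xs where "Xs = (ls + e1s, ls + e1s + e2s, ls)"
  have conv: "Y \<longlonglongrightarrow> Xs" if "\<And>t. Y (Suc t) = SS (Y t)" for Y
    unfolding Xs_def by (rule det_conv[OF pb1 pb2 pbP f1 f2 f3]) (rule that)
  from H have h1: "0 \<le> A + B ** (Ku + Kl)" and h2: "0 \<le> B ** Ku + Ll ** C" and h3: "0 \<le> B ** Ku"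
    and h4: "0 \<le> A - Ll ** C" and h5: "0 \<le> A - Lu ** C"
    and h6: "0 \<le> E *v ones - Ll *v (F *v ones)" and h7: "0 \<le> Lu *v (F *v ones) - E *v ones"
    and h8: "0 \<le> Ll *v (F *v ones)" by blast+
  have inv: "Y t \<in> Xset" if r: "\<And>t. Y (Suc t) = SS (Y t)" and y0: "Y 0 \<in> Xset" for Y t
  proof (induct t)
    case 0 show ?case by (rule y0)
  next
    case (Suc t)
    show ?case unfolding r
      by (rule inv_step[OF h1 h2 h3 h4 h5 h6 h7 h8 Suc])
  qed
  define Y0 where "Y0 t = (SS ^^ t) (0, 0, 0)" for t
  have r0: "Y0 (Suc t) = SS (Y0 t)" for t by (simp add: Y0_def)
  have "(0::real^'n, 0::real^'n, 0::real^'n) \<in> Xset" by (simp add: Xset_def)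
  hence y00: "Y0 0 \<in> Xset" by (simp add: Y0_def)
  have XsX: "Xs \<in> Xset"
    by (rule Xset_lim[OF inv[where Y=Y0, OF r0 y00] conv[where Y=Y0, OF r0]])
  show ?thesis
  proof (rule bexI[OF _ XsX], intro allI impI conjI)
    fix Y :: "nat \<Rightarrow> (real^'n) \<times> (real^'n) \<times> (real^'n)"
    assume r: "\<forall>t. Y (Suc t) = SS (Y t)" and y: "Y 0 \<in> Xset"
    have r': "\<And>t. Y (Suc t) = SS (Y t)" using r by blast
    show "Y t \<in> Xset" for t by (rule inv[where Y=Y, OF r' y])
    show "Y \<longlonglongrightarrow> Xs" by (rule conv[where Y=Y, OF r'])
  qed
qed


end

lemma lim_diffs:
  fixes Y Y' :: "nat \<Rightarrow> (real^'n) \<times> (real^'n) \<times> (real^'n)"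
  assumes h: "Y \<longlonglongrightarrow> L" and h': "Y' \<longlonglongrightarrow> L"
  shows "(\<lambda>t. (fst (Y' t) - snd (snd (Y' t))) - (fst (Y t) - snd (snd (Y t)))) \<longlonglongrightarrow> 0"
    and "(\<lambda>t. (fst (snd (Y' t)) - fst (Y' t)) - (fst (snd (Y t)) - fst (Y t))) \<longlonglongrightarrow> 0"
    and "(\<lambda>t. snd (snd (Y' t)) - snd (snd (Y t))) \<longlonglongrightarrow> 0"
proof -
  have f: "(\<lambda>t. fst (Y t)) \<longlonglongrightarrow> fst L" "(\<lambda>t. fst (snd (Y t))) \<longlonglongrightarrow> fst (snd L)"
    "(\<lambda>t. snd (snd (Y t))) \<longlonglongrightarrow> snd (snd L)"
    "(\<lambda>t. fst (Y' t)) \<longlonglongrightarrow> fst L" "(\<lambda>t. fst (snd (Y' t))) \<longlonglongrightarrow> fst (snd L)"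
    "(\<lambda>t. snd (snd (Y' t))) \<longlonglongrightarrow> snd (snd L)"
    using h h' by (auto intro!: tendsto_fst tendsto_snd)
  show "(\<lambda>t. (fst (Y' t) - snd (snd (Y' t))) - (fst (Y t) - snd (snd (Y t)))) \<longlonglongrightarrow> 0"
    using tendsto_diff[OF tendsto_diff[OF f(4) f(6)] tendsto_diff[OF f(1) f(3)]] by simp
  show "(\<lambda>t. (fst (snd (Y' t)) - fst (Y' t)) - (fst (snd (Y t)) - fst (Y t))) \<longlonglongrightarrow> 0"
    using tendsto_diff[OF tendsto_diff[OF f(5) f(4)] tendsto_diff[OF f(2) f(1)]] by simp
  show "(\<lambda>t. snd (snd (Y' t)) - snd (snd (Y t))) \<longlonglongrightarrow> 0"
    using tendsto_diff[OF f(6) f(3)] by simp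
qed

context
  fixes A :: "real^'n^'n" and B :: "real^'m^'n" and C :: "real^'n^'p"
    and E :: "real^'q^'n" and F :: "real^'r^'p"
    and Lu Ll :: "real^'p^'n" and Ku Kl :: "real^'n^'m"
begin

lemma dir2:
  assumes Hx: "\<And>X0. X0 \<in> Xset \<Longrightarrow> 0 \<le> fst X0 \<Longrightarrow>
      (\<forall>t. (stp A B C E F Lu Ll Ku Kl ^^ t) X0 \<in> Xset) \<and> (\<lambda>t. (stp A B C E F Lu Ll Ku Kl ^^ t) X0) \<longlonglongrightarrow> Xs"
  shows "schur (A + B ** (Ku + Kl)) \<and> schur (A - Lu ** C) \<and> schur (A - Ll ** C) \<and>
          0 \<le> A + B ** (Ku + Kl) \<and> 0 \<le> A + B ** Ku \<and> 0 \<le> B ** Ku \<and>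
          0 \<le> A - Lu ** C \<and> 0 \<le> A - Ll ** C \<and> 0 \<le> B ** Ku + Ll ** C \<and>
          0 \<le> Lu *v (F *v ones) - E *v ones \<and> 0 \<le> E *v ones - Ll *v (F *v ones) \<and>
          0 \<le> Ll *v (F *v ones)"
proof -
  let ?S = "stp A B C E F Lu Ll Ku Kl"
  have step1: "?S X0 \<in> Xset" if "X0 \<in> Xset" "0 \<le> fst X0" for X0
    using Hx[OF that] by (metis One_nat_def funpow_0 funpow_Suc_right o_apply)
  have lim: "(\<lambda>t. (?S ^^ t) X0) \<longlonglongrightarrow> Xs" if "X0 \<in> Xset" "0 \<le> fst X0" for X0
    using Hx[OF that] by blast
  have rec: "\<And>t. (?S ^^ Suc t) X0 = ?S ((?S ^^ t) X0)" for X0 by simp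
  have inXa: "(z, z, 0) \<in> Xset" "(z, z, z) \<in> Xset" "(0, z, 0) \<in> Xset" if "0 \<le> z" for z :: "real^'n"
    using that by (auto simp: Xset_def)
  have fXa: "0 \<le> fst (z, z, 0::real^'n)" "0 \<le> fst (z, z, z)" "0 \<le> fst (0::real^'n, z, 0::real^'n)"
    if "0 \<le> z" for z :: "real^'n"
    using that by auto
  note zsimps = fst_conv snd_conv diff_zero diff_self matrix_vector_mult_0_right add_0_left add_0_right
  have ha: "0 \<le> (B ** Ku + Ll ** C) *v z + Ll *v (F *v ones)"
    and hb: "0 \<le> (A - Ll ** C) *v z + (E *v ones - Ll *v (F *v ones))"
    and hc: "0 \<le> (A + B ** Ku) *v z + E *v ones"
    and hd: "0 \<le> (A + B ** (Ku + Kl)) *v z + Ll *v (F *v ones)"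
    and he: "0 \<le> (A - Lu ** C) *v z + (Lu *v (F *v ones) - E *v ones)"
    and hf: "0 \<le> (B ** Ku) *v z + Ll *v (F *v ones)"
    if z: "0 \<le> z" for z
  proof -
    have a: "?S (z, z, 0) \<in> Xset" by (rule step1[OF inXa(1)[OF z] fXa(1)[OF z]])
    have b: "?S (z, z, z) \<in> Xset" by (rule step1[OF inXa(2)[OF z] fXa(2)[OF z]])
    have c: "?S (0, z, 0) \<in> Xset" by (rule step1[OF inXa(3)[OF z] fXa(3)[OF z]])
    from a have a1: "0 \<le> snd (snd (?S (z, z, 0)))" and a2: "0 \<le> fst (?S (z, z, 0)) - snd (snd (?S (z, z, 0)))"
      unfolding Xset_iff' by blast+
    from a have a3: "0 \<le> fst (?S (z, z, 0))" by (cases "?S (z, z, 0)") (simp add: Xset_def)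
    from b have b1: "0 \<le> snd (snd (?S (z, z, z)))" unfolding Xset_iff' by blast
    from c have c1: "0 \<le> snd (snd (?S (0, z, 0)))" and c2: "0 \<le> fst (snd (?S (0, z, 0))) - fst (?S (0, z, 0))"
      unfolding Xset_iff' by blast+
    show "0 \<le> (B ** Ku + Ll ** C) *v z + Ll *v (F *v ones)" using a1 by (simp only: S_l zsimps)
    show "0 \<le> (A - Ll ** C) *v z + (E *v ones - Ll *v (F *v ones))" using a2 by (simp only: S_e1 zsimps)
    show "0 \<le> (A + B ** Ku) *v z + E *v ones" using a3 by (simp only: S_x zsimps)
    show "0 \<le> (A + B ** (Ku + Kl)) *v z + Ll *v (F *v ones)" using b1 by (simp only: S_l zsimps)
    show "0 \<le> (A - Lu ** C) *v z + (Lu *v (F *v ones) - E *v ones)" using c2 by (simp only: S_e2 zsimps)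
    show "0 \<le> (B ** Ku) *v z + Ll *v (F *v ones)" using c1 by (simp only: S_l zsimps)
  qed
  have n1: "0 \<le> B ** Ku + Ll ** C" "0 \<le> Ll *v (F *v ones)" by (rule nonneg_extract, rule ha, simp)+
  have n2: "0 \<le> A - Ll ** C" "0 \<le> E *v ones - Ll *v (F *v ones)" by (rule nonneg_extract, rule hb, simp)+
  have n3: "0 \<le> A + B ** Ku" by (rule nonneg_extract, rule hc, simp)
  have n4: "0 \<le> A + B ** (Ku + Kl)" by (rule nonneg_extract, rule hd, simp)
  have n5: "0 \<le> A - Lu ** C" "0 \<le> Lu *v (F *v ones) - E *v ones" by (rule nonneg_extract, rule he, simp)+
  have n6: "0 \<le> B ** Ku" by (rule nonneg_extract, rule hf, simp)
  define Y0 where "Y0 t = (?S ^^ t) (0, 0, 0)" for t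
  have r0: "\<And>t. Y0 (Suc t) = ?S (Y0 t)" by (simp add: Y0_def)
  have l0: "Y0 \<longlonglongrightarrow> Xs" unfolding Y0_def by (rule lim) (auto simp: Xset_def)
  have sc1: "schur (A - Ll ** C)"
  proof (rule schur_of_conv, rule conv_all)
    fix z :: "real^'n" assume z: "0 \<le> z"
    define Y where "Y t = (?S ^^ t) (z, z, 0)" for t
    have r: "\<And>t. Y (Suc t) = ?S (Y t)" by (simp add: Y_def)
    have l: "Y \<longlonglongrightarrow> Xs" unfolding Y_def by (rule lim[OF inXa(1)[OF z] fXa(1)[OF z]])
    have "(\<lambda>t. (fst (Y t) - snd (snd (Y t))) - (fst (Y0 t) - snd (snd (Y0 t)))) \<longlonglongrightarrow> 0"
      by (rule lim_diffs(1)[OF l0 l])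
    moreover have "(fst (Y t) - snd (snd (Y t))) - (fst (Y0 t) - snd (snd (Y0 t))) = iter (A - Ll ** C) t z" for t
      using det_diff(1)[where Y=Y0 and Y'=Y and t=t, OF r0 r] by (simp add: Y_def Y0_def)
    ultimately show "(\<lambda>k. iter (A - Ll ** C) k z) \<longlonglongrightarrow> 0" by simp
  qed
  have sc2: "schur (A - Lu ** C)"
  proof (rule schur_of_conv, rule conv_all)
    fix z :: "real^'n" assume z: "0 \<le> z"
    define Y where "Y t = (?S ^^ t) (0, z, 0)" for t
    have r: "\<And>t. Y (Suc t) = ?S (Y t)" by (simp add: Y_def)
    have l: "Y \<longlonglongrightarrow> Xs" unfolding Y_def by (rule lim[OF inXa(3)[OF z] fXa(3)[OF z]])
    have "(\<lambda>t. (fst (snd (Y t)) - fst (Y t)) - (fst (snd (Y0 t)) - fst (Y0 t))) \<longlonglongrightarrow> 0"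
      by (rule lim_diffs(2)[OF l0 l])
    moreover have "(fst (snd (Y t)) - fst (Y t)) - (fst (snd (Y0 t)) - fst (Y0 t)) = iter (A - Lu ** C) t z" for t
      using det_diff(2)[where Y=Y0 and Y'=Y and t=t, OF r0 r] by (simp add: Y_def Y0_def)
    ultimately show "(\<lambda>k. iter (A - Lu ** C) k z) \<longlonglongrightarrow> 0" by simp
  qed
  have sc3: "schur (A + B ** (Ku + Kl))"
  proof (rule schur_of_conv, rule conv_all)
    fix z :: "real^'n" assume z: "0 \<le> z"
    define Y where "Y t = (?S ^^ t) (z, z, z)" for t
    have r: "\<And>t. Y (Suc t) = ?S (Y t)" by (simp add: Y_def)
    have l: "Y \<longlonglongrightarrow> Xs" unfolding Y_def by (rule lim[OF inXa(2)[OF z] fXa(2)[OF z]])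
    have "(\<lambda>t. snd (snd (Y t)) - snd (snd (Y0 t))) \<longlonglongrightarrow> 0"
      by (rule lim_diffs(3)[OF l0 l])
    moreover have "snd (snd (Y t)) - snd (snd (Y0 t)) = iter (A + B ** (Ku + Kl)) t z" for t
      using det_diff_l[where Y=Y0 and Y'=Y and t=t, OF r0 r] by (simp add: Y_def Y0_def)
    ultimately show "(\<lambda>k. iter (A + B ** (Ku + Kl)) k z) \<longlonglongrightarrow> 0" by simp
  qed
  show ?thesis using sc1 sc2 sc3 n1 n2 n3 n4 n5 n6 by blast
qed

end

(* ---- part G ---- *)
theorem theorem2:
  fixes M :: "'a measure"
    and A :: "real^'n^'n" and B :: "real^'m^'n" and C :: "real^'n^'p"
    and E :: "real^'q^'n" and F :: "real^'r^'p"
    and Lu Ll :: "real^'p^'n" and Ku Kl :: "real^'n^'m"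
    and w :: "nat \<Rightarrow> 'a \<Rightarrow> real^'q" and v :: "nat \<Rightarrow> 'a \<Rightarrow> real^'r"
  assumes "prob_space M"
    and "0 \<le> A" and "0 \<le> E"
    and w_int: "\<And>t. integrable M (w t)"
    and w_nn: "\<And>t \<omega>. \<omega> \<in> space M \<Longrightarrow> 0 \<le> w t \<omega>"
    and w_mean: "\<And>t. integral\<^sup>L M (w t) = ones"
    and v_int: "\<And>t. integrable M (v t)"
    and v_nn: "\<And>t \<omega>. \<omega> \<in> space M \<Longrightarrow> 0 \<le> v t \<omega>"
    and v_mean: "\<And>t. integral\<^sup>L M (v t) = ones"
  shows "(schur (A + B ** (Ku + Kl)) \<and> schur (A - Lu ** C) \<and> schur (A - Ll ** C) \<and>
          0 \<le> A + B ** (Ku + Kl) \<and> 0 \<le> A + B ** Ku \<and> 0 \<le> B ** Ku \<and>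
          0 \<le> A - Lu ** C \<and> 0 \<le> A - Ll ** C \<and> 0 \<le> B ** Ku + Ll ** C \<and>
          0 \<le> Lu *v (F *v ones) - E *v ones \<and> 0 \<le> E *v ones - Ll *v (F *v ones) \<and>
          0 \<le> Ll *v (F *v ones))
     \<longleftrightarrow>
         (\<exists>Xstar \<in> Xset.
            \<forall>x0 xu0 xl0 :: 'a \<Rightarrow> real^'n.
              integrable M x0 \<longrightarrow> integrable M xu0 \<longrightarrow> integrable M xl0 \<longrightarrow>
              (\<forall>\<omega>\<in>space M. 0 \<le> x0 \<omega>) \<longrightarrow>
              integral\<^sup>L M (\<lambda>\<omega>. (x0 \<omega>, xu0 \<omega>, xl0 \<omega>)) \<in> Xset \<longrightarrow>
              (let X = (\<lambda>t. integral\<^sup>L M (traj A B C E F Lu Ll Ku Kl w v x0 xu0 xl0 t))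
               in (\<forall>t. X t \<in> Xset) \<and> X \<longlonglongrightarrow> Xstar))"
proof -
  note ps = assms(1)
  have fm: "finite_measure M" by (rule prob_space.finite_measure[OF ps])
  have m1: "measure M (space M) = 1" by (rule prob_space.prob_space[OF ps])
  let ?S = "stp A B C E F Lu Ll Ku Kl"
  have Xrec: "integral\<^sup>L M (traj A B C E F Lu Ll Ku Kl w v x0 xu0 xl0 t)
      = (?S ^^ t) (integral\<^sup>L M (\<lambda>\<omega>. (x0 \<omega>, xu0 \<omega>, xl0 \<omega>)))"
    if i1: "integrable M x0" and i2: "integrable M xu0" and i3: "integrable M xl0" for x0 xu0 xl0 t
  proof (induct t)
    case 0
    have "traj A B C E F Lu Ll Ku Kl w v x0 xu0 xl0 0 = (\<lambda>\<omega>. (x0 \<omega>, xu0 \<omega>, xl0 \<omega>))"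
      by (rule ext) simp
    thus ?case by simp
  next
    case (Suc t)
    have "integral\<^sup>L M (traj A B C E F Lu Ll Ku Kl w v x0 xu0 xl0 (Suc t))
        = ?S (integral\<^sup>L M (traj A B C E F Lu Ll Ku Kl w v x0 xu0 xl0 t))"
      by (rule traj_exp)
         (rule w_int w_mean v_int v_mean i1 i2 i3)+
    also have "\<dots> = (?S ^^ Suc t) (integral\<^sup>L M (\<lambda>\<omega>. (x0 \<omega>, xu0 \<omega>, xl0 \<omega>)))"
      by (simp only: Suc funpow.simps o_apply)
    finally show ?case .
  qed
  show ?thesis
  proof
    assume H: "schur (A + B ** (Ku + Kl)) \<and> schur (A - Lu ** C) \<and> schur (A - Ll ** C) \<and>
          0 \<le> A + B ** (Ku + Kl) \<and> 0 \<le> A + B ** Ku \<and> 0 \<le> B ** Ku \<and>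
          0 \<le> A - Lu ** C \<and> 0 \<le> A - Ll ** C \<and> 0 \<le> B ** Ku + Ll ** C \<and>
          0 \<le> Lu *v (F *v ones) - E *v ones \<and> 0 \<le> E *v ones - Ll *v (F *v ones) \<and>
          0 \<le> Ll *v (F *v ones)"
    from dir1[OF H] obtain Xs where XsX: "Xs \<in> Xset"
      and HY: "\<forall>Y. (\<forall>t. Y (Suc t) = ?S (Y t)) \<longrightarrow> Y 0 \<in> Xset \<longrightarrow> (\<forall>t. Y t \<in> Xset) \<and> Y \<longlonglongrightarrow> Xs"
      by blast
    show "\<exists>Xstar \<in> Xset.
            \<forall>x0 xu0 xl0 :: 'a \<Rightarrow> real^'n.
              integrable M x0 \<longrightarrow> integrable M xu0 \<longrightarrow> integrable M xl0 \<longrightarrow>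
              (\<forall>\<omega>\<in>space M. 0 \<le> x0 \<omega>) \<longrightarrow>
              integral\<^sup>L M (\<lambda>\<omega>. (x0 \<omega>, xu0 \<omega>, xl0 \<omega>)) \<in> Xset \<longrightarrow>
              (let X = (\<lambda>t. integral\<^sup>L M (traj A B C E F Lu Ll Ku Kl w v x0 xu0 xl0 t))
               in (\<forall>t. X t \<in> Xset) \<and> X \<longlonglongrightarrow> Xstar)"
    proof (rule bexI[OF _ XsX], intro allI impI)
      fix x0 xu0 xl0 :: "'a \<Rightarrow> real^'n"
      assume i1: "integrable M x0" and i2: "integrable M xu0" and i3: "integrable M xl0"
        and X0: "integral\<^sup>L M (\<lambda>\<omega>. (x0 \<omega>, xu0 \<omega>, xl0 \<omega>)) \<in> Xset"
      define Y where "Y t = integral\<^sup>L M (traj A B C E F Lu Ll Ku Kl w v x0 xu0 xl0 t)" for t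
      have YY: "Y t = (?S ^^ t) (integral\<^sup>L M (\<lambda>\<omega>. (x0 \<omega>, xu0 \<omega>, xl0 \<omega>)))" for t
        unfolding Y_def by (rule Xrec[OF i1 i2 i3])
      have r: "\<forall>t. Y (Suc t) = ?S (Y t)" by (simp add: YY)
      have y0: "Y 0 \<in> Xset" using X0 by (simp add: YY)
      have "(\<forall>t. Y t \<in> Xset) \<and> Y \<longlonglongrightarrow> Xs" using HY r y0 by blast
      thus "let X = (\<lambda>t. integral\<^sup>L M (traj A B C E F Lu Ll Ku Kl w v x0 xu0 xl0 t))
               in (\<forall>t. X t \<in> Xset) \<and> X \<longlonglongrightarrow> Xs"
        unfolding Let_def Y_def[abs_def] .
    qed
  next
    assume "\<exists>Xstar \<in> Xset.
            \<forall>x0 xu0 xl0 :: 'a \<Rightarrow> real^'n.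
              integrable M x0 \<longrightarrow> integrable M xu0 \<longrightarrow> integrable M xl0 \<longrightarrow>
              (\<forall>\<omega>\<in>space M. 0 \<le> x0 \<omega>) \<longrightarrow>
              integral\<^sup>L M (\<lambda>\<omega>. (x0 \<omega>, xu0 \<omega>, xl0 \<omega>)) \<in> Xset \<longrightarrow>
              (let X = (\<lambda>t. integral\<^sup>L M (traj A B C E F Lu Ll Ku Kl w v x0 xu0 xl0 t))
               in (\<forall>t. X t \<in> Xset) \<and> X \<longlonglongrightarrow> Xstar)"
    then obtain Xs where HH: "\<forall>x0 xu0 xl0 :: 'a \<Rightarrow> real^'n.
              integrable M x0 \<longrightarrow> integrable M xu0 \<longrightarrow> integrable M xl0 \<longrightarrow>
              (\<forall>\<omega>\<in>space M. 0 \<le> x0 \<omega>) \<longrightarrow>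
              integral\<^sup>L M (\<lambda>\<omega>. (x0 \<omega>, xu0 \<omega>, xl0 \<omega>)) \<in> Xset \<longrightarrow>
              (let X = (\<lambda>t. integral\<^sup>L M (traj A B C E F Lu Ll Ku Kl w v x0 xu0 xl0 t))
               in (\<forall>t. X t \<in> Xset) \<and> X \<longlonglongrightarrow> Xs)" by blast
    show "schur (A + B ** (Ku + Kl)) \<and> schur (A - Lu ** C) \<and> schur (A - Ll ** C) \<and>
          0 \<le> A + B ** (Ku + Kl) \<and> 0 \<le> A + B ** Ku \<and> 0 \<le> B ** Ku \<and>
          0 \<le> A - Lu ** C \<and> 0 \<le> A - Ll ** C \<and> 0 \<le> B ** Ku + Ll ** C \<and>
          0 \<le> Lu *v (F *v ones) - E *v ones \<and> 0 \<le> E *v ones - Ll *v (F *v ones) \<and>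
          0 \<le> Ll *v (F *v ones)"
    proof (rule dir2)
      fix X0 :: "(real^'n) \<times> (real^'n) \<times> (real^'n)"
      assume X0: "X0 \<in> Xset" and f0: "0 \<le> fst X0"
      define x0 :: "'a \<Rightarrow> real^'n" where "x0 = (\<lambda>_. fst X0)"
      define xu0 :: "'a \<Rightarrow> real^'n" where "xu0 = (\<lambda>_. fst (snd X0))"
      define xl0 :: "'a \<Rightarrow> real^'n" where "xl0 = (\<lambda>_. snd (snd X0))"
      have i1: "integrable M x0" and i2: "integrable M xu0" and i3: "integrable M xl0"
        unfolding x0_def xu0_def xl0_def by (rule finite_measure.integrable_const[OF fm])+
      have nn: "\<forall>\<omega>\<in>space M. 0 \<le> x0 \<omega>" using f0 by (simp add: x0_def)
      have I0: "integral\<^sup>L M (\<lambda>\<omega>. (x0 \<omega>, xu0 \<omega>, xl0 \<omega>)) = X0"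
        by (simp add: x0_def xu0_def xl0_def lebesgue_integral_const m1)
      have "let X = (\<lambda>t. integral\<^sup>L M (traj A B C E F Lu Ll Ku Kl w v x0 xu0 xl0 t))
               in (\<forall>t. X t \<in> Xset) \<and> X \<longlonglongrightarrow> Xs"
        using HH i1 i2 i3 nn X0 I0 by auto
      hence "(\<forall>t. integral\<^sup>L M (traj A B C E F Lu Ll Ku Kl w v x0 xu0 xl0 t) \<in> Xset) \<and>
          (\<lambda>t. integral\<^sup>L M (traj A B C E F Lu Ll Ku Kl w v x0 xu0 xl0 t)) \<longlonglongrightarrow> Xs"
        unfolding Let_def .
      thus "(\<forall>t. (?S ^^ t) X0 \<in> Xset) \<and> (\<lambda>t. (?S ^^ t) X0) \<longlonglongrightarrow> Xs"
        unfolding Xrec[OF i1 i2 i3] I0 .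
    qed
  qed
qed

end
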